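(* Let $d\ge1$ and let $G$ be obtained from an $\mathcal{R}_d$-independent graph by adding at most $2$ edges. Then $G$ is $\mathcal{R}_{d+1}$-independent.
   Context: For a graph $G=(V,E)$ and a generic $p:V\to\mathbb{R}^d$ (coordinates algebraically independent over $\mathbb{Q}$), the rigidity matrix has a row for each $uv\in E$ with $p(u)-p(v)$ in the $d$ columns of $u$, $p(v)-p(u)$ in those of $v$, zeros elsewhere; $\mathcal{R}_d$ is its row matroid, with rank $r_d$. A graph with edge set $F$ is $\mathcal{R}_d$-independent if $r_d(F)=|F|$. Graphs are simple; added edges join existing non-adjacent vertices. *)

theory Defs
  imports Complex_Main
begin

definition simple_graph :: "'v set \<Rightarrow> 'v set set \<Rightarrow> bool" where
  "simple_graph V E \<longleftrightarrow> finite V \<and> (\<forall>e\<in>E. e \<subseteq> V \<and> card e = 2)"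

text \<open>A polynomial is a finitely supported coefficient function on monomials
  (exponent vectors supported in I).\<close>
definition alg_indep_over_rat :: "'i set \<Rightarrow> ('i \<Rightarrow> real) \<Rightarrow> bool" where
  "alg_indep_over_rat I x \<longleftrightarrow>
     (\<forall>c :: ('i \<Rightarrow> nat) \<Rightarrow> rat.
        finite {m. c m \<noteq> 0} \<longrightarrow>
        (\<forall>m. c m \<noteq> 0 \<longrightarrow> (\<forall>i. i \<notin> I \<longrightarrow> m i = 0)) \<longrightarrow>
        (\<Sum>m\<in>{m. c m \<noteq> 0}. of_rat (c m) * (\<Prod>i\<in>I. x i ^ m i)) = 0 \<longrightarrow>
        (\<forall>m. c m = 0))"

text \<open>A placement p of V in R^d (coordinate k of vertex v is p v k, k < d) is generic
  if its coordinates are algebraically independent over Q.\<close>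
definition generic :: "nat \<Rightarrow> 'v set \<Rightarrow> ('v \<Rightarrow> nat \<Rightarrow> real) \<Rightarrow> bool" where
  "generic d V p \<longleftrightarrow> alg_indep_over_rat (V \<times> {..<d}) (\<lambda>(v, k). p v k)"

text \<open>Row of the rigidity matrix for edge e = {u,w}: entry at column (x,k) is
  p x k - p y k where y is the other endpoint (x in e, k < d), and 0 otherwise.
  For x in e the sum over y in e gives exactly p x k - p (other) k.\<close>
definition rig_row :: "nat \<Rightarrow> ('v \<Rightarrow> nat \<Rightarrow> real) \<Rightarrow> 'v set \<Rightarrow> 'v \<times> nat \<Rightarrow> real" where
  "rig_row d p e = (\<lambda>(x, k). if x \<in> e \<and> k < d then (\<Sum>y\<in>e. p x k - p y k) else 0)"

definition rows_lin_indep :: "nat \<Rightarrow> ('v \<Rightarrow> nat \<Rightarrow> real) \<Rightarrow> 'v set set \<Rightarrow> bool" where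
  "rows_lin_indep d p F \<longleftrightarrow>
     (\<forall>c :: 'v set \<Rightarrow> real. (\<forall>col. (\<Sum>e\<in>F. c e * rig_row d p e col) = 0) \<longrightarrow> (\<forall>e\<in>F. c e = 0))"

text \<open>R_d-independence of a graph (V,F): the rigidity matrix rows at a generic
  placement are independent. (Independent of the choice of generic p; we quantify
  over all generic placements.)\<close>
definition rigidity_indep :: "nat \<Rightarrow> 'v set \<Rightarrow> 'v set set \<Rightarrow> bool" where
  "rigidity_indep d V F \<longleftrightarrow> (\<forall>p. generic d V p \<longrightarrow> rows_lin_indep d p F)"

end

theory Submission
  imports Defs "Jordan_Normal_Form.Determinant"
begin


definition evl :: "'i set \<Rightarrow> (rat \<times> ('i \<Rightarrow> nat)) list \<Rightarrow> ('i \<Rightarrow> real) \<Rightarrow> real" where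
  "evl I L y = (\<Sum>(r,m)\<leftarrow>L. of_rat r * (\<Prod>i\<in>I. y i ^ m i))"

definition polyfun :: "'i set \<Rightarrow> (('i \<Rightarrow> real) \<Rightarrow> real) \<Rightarrow> bool" where
  "polyfun I f \<longleftrightarrow> (\<exists>L. (\<forall>(r,m)\<in>set L. \<forall>i. i \<notin> I \<longrightarrow> m i = 0) \<and> (\<forall>y. f y = evl I L y))"

definition coefL :: "(rat \<times> 'a) list \<Rightarrow> 'a \<Rightarrow> rat" where
  "coefL L m = (\<Sum>(r,m')\<leftarrow>L. if m' = m then r else 0)"

lemma coefL_out: "m \<notin> snd ` set L \<Longrightarrow> coefL L m = 0"
  by (induction L) (auto simp: coefL_def)

lemma coefL_group:
  "(\<Sum>(r,m)\<leftarrow>L. of_rat r * (g m :: real)) = (\<Sum>m\<in>snd ` set L. of_rat (coefL L m) * g m)"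
proof (induction L)
  case Nil then show ?case by (simp add: coefL_def)
next
  case (Cons a L)
  obtain r0 m0 where a: "a = (r0, m0)" by force
  define T where "T = insert m0 (snd ` set L)"
  have fT: "finite T" "m0 \<in> T" unfolding T_def by auto
  have c: "of_rat (coefL (a # L) m) * g m = (if m = m0 then of_rat r0 * g m else 0) + of_rat (coefL L m) * g m" for m
    unfolding coefL_def a by (simp add: of_rat_add distrib_right)
  have "(\<Sum>m\<in>T. of_rat (coefL (a#L) m) * g m)
     = (\<Sum>m\<in>T. (if m = m0 then of_rat r0 * g m else 0)) + (\<Sum>m\<in>T. of_rat (coefL L m) * g m)"
    unfolding c by (rule sum.distrib)
  also have "(\<Sum>m\<in>T. (if m = m0 then of_rat r0 * g m else 0)) = of_rat r0 * g m0"
    using fT by (simp add: sum.delta')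
  also have "(\<Sum>m\<in>T. of_rat (coefL L m) * g m) = (\<Sum>m\<in>snd ` set L. of_rat (coefL L m) * g m)"
    unfolding T_def by (cases "m0 \<in> snd ` set L") (auto simp: coefL_out insert_absorb)
  finally have "(\<Sum>m\<in>T. of_rat (coefL (a#L) m) * g m) = of_rat r0 * g m0 + (\<Sum>m\<in>snd ` set L. of_rat (coefL L m) * g m)" .
  moreover have "snd ` set (a # L) = T" unfolding T_def a by simp
  ultimately show ?case using Cons by (simp add: a)
qed

lemma polyfun_generic_zero:
  assumes "polyfun I f" "alg_indep_over_rat I x" "f x = 0"
  shows "f y = 0"
proof -
  obtain L where L: "\<forall>(r,m)\<in>set L. \<forall>i. i \<notin> I \<longrightarrow> m i = 0" "\<forall>y. f y = evl I L y"
    using assms(1) unfolding polyfun_def by blast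
  define c where "c = coefL L"
  have sub: "{m. c m \<noteq> 0} \<subseteq> snd ` set L"
  proof
    fix m assume "m \<in> {m. c m \<noteq> 0}"
    then show "m \<in> snd ` set L" using coefL_out[of m L] unfolding c_def by auto
  qed
  have ev: "evl I L z = (\<Sum>m\<in>{m. c m \<noteq> 0}. of_rat (c m) * (\<Prod>i\<in>I. z i ^ m i))" for z
  proof -
    have "evl I L z = (\<Sum>m\<in>snd ` set L. of_rat (c m) * (\<Prod>i\<in>I. z i ^ m i))"
      unfolding evl_def c_def by (rule coefL_group)
    also have "\<dots> = (\<Sum>m\<in>{m. c m \<noteq> 0}. of_rat (c m) * (\<Prod>i\<in>I. z i ^ m i))"
      by (rule sum.mono_neutral_right) (use sub in auto)
    finally show ?thesis .
  qed
  have fin: "finite {m. c m \<noteq> 0}" using sub finite_subset by blast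
  have mon: "\<forall>m. c m \<noteq> 0 \<longrightarrow> (\<forall>i. i \<notin> I \<longrightarrow> m i = 0)"
  proof (intro allI impI)
    fix m i assume "c m \<noteq> 0" "i \<notin> I"
    then have "m \<in> snd ` set L" using sub by blast
    then obtain r where "(r, m) \<in> set L" by force
    then show "m i = 0" using L(1) \<open>i \<notin> I\<close> by fastforce
  qed
  have z: "(\<Sum>m\<in>{m. c m \<noteq> 0}. of_rat (c m) * (\<Prod>i\<in>I. x i ^ m i)) = 0"
    using ev[of x] L(2) assms(3) by simp
  have "\<forall>m. c m = 0"
    using assms(2)[unfolded alg_indep_over_rat_def, rule_format, of c, OF fin _ z] mon by blast
  then show ?thesis using ev[of y] L(2) by simp
qed

lemma polyfun_const: "polyfun I (\<lambda>y. of_rat r)"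
  unfolding polyfun_def evl_def by (rule exI[of _ "[(r, \<lambda>_. 0)]"]) simp

lemma polyfun_zero: "polyfun I (\<lambda>y. 0)"
  unfolding polyfun_def evl_def by (rule exI[of _ "[]"]) simp

lemma polyfun_var: assumes "finite I" "i \<in> I" shows "polyfun I (\<lambda>y. y i)"
  unfolding polyfun_def evl_def
proof (rule exI[of _ "[(1, \<lambda>j. if j = i then 1 else 0)]"], intro conjI allI)
  fix y :: "'a \<Rightarrow> real"
  have "(\<Prod>j\<in>I. y j ^ (if j = i then 1 else 0)) = (\<Prod>j\<in>I. if j = i then y j else 1)"
    by (rule prod.cong) auto
  also have "\<dots> = y i" using assms by (simp add: prod.delta)
  finally show "y i = (\<Sum>(r, m)\<leftarrow>[(1, \<lambda>j. if j = i then 1 else 0)]. of_rat r * (\<Prod>i\<in>I. y i ^ m i))"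
    by simp
qed (use assms in auto)

lemma polyfun_add: assumes "polyfun I f" "polyfun I g" shows "polyfun I (\<lambda>y. f y + g y)"
proof -
  obtain L1 where L1: "\<forall>(r,m)\<in>set L1. \<forall>i. i \<notin> I \<longrightarrow> m i = 0" "\<forall>y. f y = evl I L1 y"
    using assms(1) unfolding polyfun_def by blast
  obtain L2 where L2: "\<forall>(r,m)\<in>set L2. \<forall>i. i \<notin> I \<longrightarrow> m i = 0" "\<forall>y. g y = evl I L2 y"
    using assms(2) unfolding polyfun_def by blast
  show ?thesis unfolding polyfun_def
    by (rule exI[of _ "L1 @ L2"]) (use L1 L2 in \<open>auto simp: evl_def\<close>)
qed

lemma evl_mult: "evl I (concat (map (\<lambda>(r1,m1). map (\<lambda>(r2,m2). (r1*r2, \<lambda>i. m1 i + m2 i)) L2) L1)) y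
   = evl I L1 y * evl I L2 y"
proof (induction L1)
  case Nil then show ?case by (simp add: evl_def)
next
  case (Cons a L1)
  obtain r1 m1 where a: "a = (r1, m1)" by force
  have "evl I (map (\<lambda>(r2,m2). (r1*r2, \<lambda>i. m1 i + m2 i)) L2) y
      = of_rat r1 * (\<Prod>i\<in>I. y i ^ m1 i) * evl I L2 y"
    unfolding evl_def
    by (induction L2) (auto simp: of_rat_mult power_add prod.distrib algebra_simps)
  then show ?case using Cons by (simp add: a evl_def algebra_simps)
qed

lemma polyfun_mult: assumes "polyfun I f" "polyfun I g" shows "polyfun I (\<lambda>y. f y * g y)"
proof -
  obtain L1 where L1: "\<forall>(r,m)\<in>set L1. \<forall>i. i \<notin> I \<longrightarrow> m i = 0" "\<forall>y. f y = evl I L1 y"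
    using assms(1) unfolding polyfun_def by blast
  obtain L2 where L2: "\<forall>(r,m)\<in>set L2. \<forall>i. i \<notin> I \<longrightarrow> m i = 0" "\<forall>y. g y = evl I L2 y"
    using assms(2) unfolding polyfun_def by blast
  show ?thesis unfolding polyfun_def
    by (rule exI[of _ "concat (map (\<lambda>(r1,m1). map (\<lambda>(r2,m2). (r1*r2, \<lambda>i. m1 i + m2 i)) L2) L1)"])
      (use L1 L2 in \<open>auto simp: evl_mult\<close>)
qed

lemma polyfun_diff: assumes "polyfun I f" "polyfun I g" shows "polyfun I (\<lambda>y. f y - g y)"
proof -
  have "polyfun I (\<lambda>y. f y + of_rat (-1) * g y)"
    by (intro polyfun_add polyfun_mult polyfun_const assms)
  then show ?thesis by (simp add: of_rat_minus)
qed

lemma polyfun_int: "polyfun I (\<lambda>y. of_int k)"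
  using polyfun_const[of I "of_int k"] by simp

lemma polyfun_sum: assumes "finite S" "\<And>s. s \<in> S \<Longrightarrow> polyfun I (f s)"
  shows "polyfun I (\<lambda>y. \<Sum>s\<in>S. f s y)"
  using assms by (induction S rule: finite_induct) (auto intro: polyfun_add polyfun_zero)

lemma polyfun_prod: assumes "finite S" "\<And>s. s \<in> S \<Longrightarrow> polyfun I (f s)"
  shows "polyfun I (\<lambda>y. \<Prod>s\<in>S. f s y)"
  using assms
proof (induction S rule: finite_induct)
  case empty then show ?case using polyfun_const[of I 1] by simp
next
  case (insert x F) then show ?case by (auto intro: polyfun_mult)
qed



lemma sum_set_nth: "distinct fs \<Longrightarrow> (\<Sum>e\<in>set fs. g e) = (\<Sum>i<length fs. g (fs ! i))"
  using sum.reindex_bij_betw[OF bij_betw_nth[of fs "{..<length fs}" "set fs"], of g] by simp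

lemma rli_idx:
  assumes "distinct fs"
  shows "rows_lin_indep D p (set fs) \<longleftrightarrow>
    (\<forall>v. (\<forall>cl. (\<Sum>i<length fs. v i * rig_row D p (fs!i) cl) = 0) \<longrightarrow> (\<forall>i<length fs. v i = 0))"
proof
  assume H: "rows_lin_indep D p (set fs)"
  show "\<forall>v. (\<forall>cl. (\<Sum>i<length fs. v i * rig_row D p (fs!i) cl) = 0) \<longrightarrow> (\<forall>i<length fs. v i = 0)"
  proof (intro allI impI)
    fix v i assume v: "\<forall>cl. (\<Sum>i<length fs. v i * rig_row D p (fs!i) cl) = 0" and i: "i < length fs"
    define c where "c e = v (SOME j. j < length fs \<and> fs ! j = e)" for e
    have ci: "c (fs ! j) = v j" if "j < length fs" for j
    proof -
      have "(SOME k. k < length fs \<and> fs ! k = fs ! j) = j"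
        using that assms by (intro some_equality) (auto simp: nth_eq_iff_index_eq)
      then show ?thesis by (simp add: c_def)
    qed
    have "\<forall>cl. (\<Sum>e\<in>set fs. c e * rig_row D p e cl) = 0"
      using v by (simp add: sum_set_nth[OF assms] ci)
    then have "\<forall>e\<in>set fs. c e = 0" using H unfolding rows_lin_indep_def by blast
    then show "v i = 0" using ci[OF i] i by force
  qed
next
  assume H: "\<forall>v. (\<forall>cl. (\<Sum>i<length fs. v i * rig_row D p (fs!i) cl) = 0) \<longrightarrow> (\<forall>i<length fs. v i = 0)"
  show "rows_lin_indep D p (set fs)" unfolding rows_lin_indep_def
  proof (intro allI impI ballI)
    fix c e assume c: "\<forall>cl. (\<Sum>e\<in>set fs. c e * rig_row D p e cl) = 0" and e: "e \<in> set fs"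
    have "\<forall>cl. (\<Sum>i<length fs. c (fs ! i) * rig_row D p (fs!i) cl) = 0"
      using c by (simp add: sum_set_nth[OF assms])
    then have "\<forall>i<length fs. c (fs ! i) = 0"
      by (rule mp[OF spec[OF H, of "\<lambda>i. c (fs ! i)"]])
    then show "c e = 0" using e by (metis in_set_conv_nth)
  qed
qed

definition gram :: "nat \<Rightarrow> 'v set \<Rightarrow> ('v \<Rightarrow> nat \<Rightarrow> real) \<Rightarrow> 'v set \<Rightarrow> 'v set \<Rightarrow> real" where
  "gram D V p e f = (\<Sum>cl\<in>V \<times> {..<D}. rig_row D p e cl * rig_row D p f cl)"

definition GM :: "nat \<Rightarrow> 'v set \<Rightarrow> ('v \<Rightarrow> nat \<Rightarrow> real) \<Rightarrow> 'v set list \<Rightarrow> real mat" where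
  "GM D V p fs = mat (length fs) (length fs) (\<lambda>(i,j). gram D V p (fs!i) (fs!j))"

lemma poly_rig:
  assumes "finite V" "e \<subseteq> V"
  shows "polyfun (V \<times> {..<D}) (\<lambda>y. rig_row D (\<lambda>v k. y (v,k)) e cl)"
proof -
  obtain x k where cl: "cl = (x, k)" by force
  have fe: "finite e" using assms finite_subset by blast
  show ?thesis
  proof (cases "x \<in> e \<and> k < D")
    case True
    have "polyfun (V \<times> {..<D}) (\<lambda>y. \<Sum>w\<in>e. y (x,k) - y (w,k))"
      using True assms fe by (intro polyfun_sum polyfun_diff polyfun_var) auto
    then show ?thesis using True by (simp add: rig_row_def cl)
  next
    case False
    then have "rig_row D (\<lambda>v k. y (v,k)) e cl = 0" for y by (auto simp: rig_row_def cl)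
    then show ?thesis using polyfun_zero by simp
  qed
qed

lemma poly_gram:
  assumes "finite V" "e \<subseteq> V" "f \<subseteq> V"
  shows "polyfun (V \<times> {..<D}) (\<lambda>y. gram D V (\<lambda>v k. y (v,k)) e f)"
  unfolding gram_def using assms
  by (intro polyfun_sum polyfun_mult poly_rig) auto

lemma poly_det:
  assumes "finite V" "\<forall>e\<in>set fs. e \<subseteq> V"
  shows "polyfun (V \<times> {..<D}) (\<lambda>y. det (GM D V (\<lambda>v k. y (v,k)) fs))"
proof -
  let ?n = "length fs"
  have eq: "det (GM D V (\<lambda>v k. y (v,k)) fs) =
     (\<Sum>p\<in>{p. p permutes {0..<?n}}. of_int (sign p) * (\<Prod>i\<in>{0..<?n}. gram D V (\<lambda>v k. y (v,k)) (fs!i) (fs!(p i))))" for y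
  proof -
    have "det (GM D V (\<lambda>v k. y (v,k)) fs) =
     (\<Sum>p\<in>{p. p permutes {0..<?n}}. of_int (sign p) * (\<Prod>i\<in>{0..<?n}. GM D V (\<lambda>v k. y (v,k)) fs $$ (i, p i)))"
      by (rule det_def') (simp add: GM_def)
    also have "\<dots> = (\<Sum>p\<in>{p. p permutes {0..<?n}}. of_int (sign p) * (\<Prod>i\<in>{0..<?n}. gram D V (\<lambda>v k. y (v,k)) (fs!i) (fs!(p i))))"
    proof (rule sum.cong[OF refl], rule arg_cong[where f="\<lambda>t. _ * t"], rule prod.cong[OF refl])
      fix p i assume p: "p \<in> {p. p permutes {0..<?n}}" and i: "i \<in> {0..<?n}"
      have "p i < ?n" using p i permutes_in_image by fastforce
      then show "GM D V (\<lambda>v k. y (v,k)) fs $$ (i, p i) = gram D V (\<lambda>v k. y (v,k)) (fs!i) (fs!(p i))"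
        using i by (simp add: GM_def)
    qed
    finally show ?thesis .
  qed
  have "polyfun (V \<times> {..<D}) (\<lambda>y. \<Sum>p\<in>{p. p permutes {0..<?n}}. of_int (sign p) * (\<Prod>i\<in>{0..<?n}. gram D V (\<lambda>v k. y (v,k)) (fs!i) (fs!(p i))))"
  proof (intro polyfun_sum polyfun_mult polyfun_int polyfun_prod poly_gram assms(1))
    show "finite {p. p permutes {0..<?n}}" by (simp add: finite_permutations)
  next
    fix p i assume "p \<in> {p. p permutes {0..<?n}}" "i \<in> {0..<?n}"
    moreover then have "p i < ?n" using permutes_in_image by fastforce
    ultimately show "fs ! i \<subseteq> V" "fs ! (p i) \<subseteq> V" using assms(2) by auto
  qed simp
  then show ?thesis by (simp add: eq)
qed



lemma gram_sum:
  "(\<Sum>j<n. gram D V p (g i) (g j) * v j) =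
   (\<Sum>cl\<in>V \<times> {..<D}. rig_row D p (g i) cl * (\<Sum>j<n. v j * rig_row D p (g j) cl))"
proof -
  have "(\<Sum>j<n. gram D V p (g i) (g j) * v j) =
     (\<Sum>j<n. \<Sum>cl\<in>V \<times> {..<D}. rig_row D p (g i) cl * (v j * rig_row D p (g j) cl))"
    unfolding gram_def sum_distrib_right by (simp add: mult_ac)
  also have "\<dots> = (\<Sum>cl\<in>V \<times> {..<D}. \<Sum>j<n. rig_row D p (g i) cl * (v j * rig_row D p (g j) cl))"
    by (rule sum.swap)
  also have "\<dots> = (\<Sum>cl\<in>V \<times> {..<D}. rig_row D p (g i) cl * (\<Sum>j<n. v j * rig_row D p (g j) cl))"
    by (simp add: sum_distrib_left)
  finally show ?thesis .
qed

lemma quad_sum: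
  "(\<Sum>i<n. u i * (\<Sum>j<n. gram D V p (g i) (g j) * v j)) =
   (\<Sum>cl\<in>V \<times> {..<D}. (\<Sum>i<n. u i * rig_row D p (g i) cl) * (\<Sum>j<n. v j * rig_row D p (g j) cl))"
proof -
  have "(\<Sum>i<n. u i * (\<Sum>j<n. gram D V p (g i) (g j) * v j)) =
     (\<Sum>i<n. \<Sum>cl\<in>V \<times> {..<D}. u i * rig_row D p (g i) cl * (\<Sum>j<n. v j * rig_row D p (g j) cl))"
    unfolding gram_sum sum_distrib_left by (simp add: mult_ac)
  also have "\<dots> = (\<Sum>cl\<in>V \<times> {..<D}. \<Sum>i<n. u i * rig_row D p (g i) cl * (\<Sum>j<n. v j * rig_row D p (g j) cl))"
    by (rule sum.swap)
  also have "\<dots> = (\<Sum>cl\<in>V \<times> {..<D}. (\<Sum>i<n. u i * rig_row D p (g i) cl) * (\<Sum>j<n. v j * rig_row D p (g j) cl))"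
    by (simp add: sum_distrib_right)
  finally show ?thesis .
qed

lemma rig_row_out: "e \<subseteq> V \<Longrightarrow> cl \<notin> V \<times> {..<D} \<Longrightarrow> rig_row D p e cl = 0"
  by (cases cl) (auto simp: rig_row_def)

lemma GM_mult:
  assumes "i < length fs"
  shows "(GM D V p fs *\<^sub>v vec (length fs) v) $ i = (\<Sum>j<length fs. gram D V p (fs!i) (fs!j) * v j)"
  using assms by (simp add: GM_def scalar_prod_def atLeast0LessThan)

lemma det_imp_indep:
  assumes "distinct fs" "det (GM D V p fs) \<noteq> 0"
  shows "rows_lin_indep D p (set fs)"
  unfolding rli_idx[OF assms(1)]
proof (intro allI impI)
  fix v i assume v: "\<forall>cl. (\<Sum>i<length fs. v i * rig_row D p (fs!i) cl) = 0" and i: "i < length fs"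
  let ?n = "length fs"
  have "GM D V p fs *\<^sub>v vec ?n v = 0\<^sub>v ?n"
  proof (rule eq_vecI)
    fix j assume "j < dim_vec (0\<^sub>v ?n :: real vec)"
    then have j: "j < ?n" by simp
    show "(GM D V p fs *\<^sub>v vec ?n v) $ j = 0\<^sub>v ?n $ j"
    proof -
      have "(\<Sum>k<?n. gram D V p (fs!j) (fs!k) * v k) =
        (\<Sum>cl\<in>V \<times> {..<D}. rig_row D p (fs!j) cl * (\<Sum>k<?n. v k * rig_row D p (fs!k) cl))"
        by (rule gram_sum)
      then show ?thesis using j v by (simp add: GM_mult)
    qed
  qed (simp add: GM_def)
  moreover have "GM D V p fs \<in> carrier_mat ?n ?n" by (simp add: GM_def)
  ultimately have "vec ?n v = 0\<^sub>v ?n"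
    using det_0_iff_vec_prod_zero[of "GM D V p fs" ?n] assms(2) vec_carrier[of ?n v] by blast
  then have "vec ?n v $ i = 0" using i by simp
  then show "v i = 0" using i by simp
qed

lemma indep_imp_det:
  assumes "distinct fs" "finite V" "\<forall>e\<in>set fs. e \<subseteq> V" "rows_lin_indep D p (set fs)"
  shows "det (GM D V p fs) \<noteq> 0"
proof
  let ?n = "length fs"
  assume "det (GM D V p fs) = 0"
  moreover have cm: "GM D V p fs \<in> carrier_mat ?n ?n" by (simp add: GM_def)
  ultimately obtain w where w: "w \<in> carrier_vec ?n" "w \<noteq> 0\<^sub>v ?n" "GM D V p fs *\<^sub>v w = 0\<^sub>v ?n"
    using det_0_iff_vec_prod_zero[OF cm] by auto
  define v where "v i = w $ i" for i
  have wv: "w = vec ?n v" using w(1) unfolding v_def by auto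
  have row0: "(\<Sum>j<?n. gram D V p (fs!i) (fs!j) * v j) = 0" if "i < ?n" for i
  proof -
    have "(GM D V p fs *\<^sub>v vec ?n v) $ i = 0" using w(3) wv that by simp
    then show ?thesis using GM_mult[OF that] by simp
  qed
  let ?S = "\<lambda>cl. (\<Sum>i<?n. v i * rig_row D p (fs!i) cl)"
  have "(\<Sum>cl\<in>V \<times> {..<D}. ?S cl * ?S cl) = (\<Sum>i<?n. v i * (\<Sum>j<?n. gram D V p (fs!i) (fs!j) * v j))"
    by (rule quad_sum[symmetric])
  also have "\<dots> = 0" using row0 by simp
  finally have q: "(\<Sum>cl\<in>V \<times> {..<D}. ?S cl * ?S cl) = 0" .
  have fin: "finite (V \<times> {..<D})" using assms(2) by simp
  have "\<forall>cl\<in>V \<times> {..<D}. ?S cl * ?S cl = 0"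
    using sum_nonneg_eq_0_iff[OF fin, of "\<lambda>cl. ?S cl * ?S cl"] q by simp
  then have S0: "?S cl = 0" for cl
  proof (cases "cl \<in> V \<times> {..<D}")
    case False
    then have "rig_row D p (fs!i) cl = 0" if "i < ?n" for i
      using assms(3) that by (intro rig_row_out) auto
    then show ?thesis by simp
  qed auto
  have "\<forall>i<?n. v i = 0" using assms(4)[unfolded rli_idx[OF assms(1)]] S0 by blast
  then have "w = 0\<^sub>v ?n" using wv by auto
  then show False using w(2) by simp
qed

lemma transfer:
  assumes "finite V" "finite F" "\<forall>e\<in>F. e \<subseteq> V" "rows_lin_indep D y F" "generic D V q"
  shows "rows_lin_indep D q F"
proof -
  obtain fs where fs: "distinct fs" "set fs = F" using finite_distinct_list[OF assms(2)] by blast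
  let ?f = "\<lambda>Y. det (GM D V (\<lambda>v k. Y (v,k)) fs)"
  have pf: "polyfun (V \<times> {..<D}) ?f" using poly_det[OF assms(1)] assms(3) fs by simp
  have "?f (\<lambda>(v,k). y v k) \<noteq> 0"
    using indep_imp_det[OF fs(1) assms(1)] assms(3,4) fs by simp
  then have "?f (\<lambda>(v,k). q v k) \<noteq> 0"
    using polyfun_generic_zero[OF pf, of "\<lambda>(v,k). q v k" "\<lambda>(v,k). y v k"] assms(5)
    unfolding generic_def by blast
  then have "det (GM D V q fs) \<noteq> 0" by simp
  then show ?thesis using det_imp_indep[OF fs(1)] fs(2) by simp
qed



lemma alg_indep_mono:
  assumes "finite I" "J \<subseteq> I" "alg_indep_over_rat I x"
  shows "alg_indep_over_rat J x"
  unfolding alg_indep_over_rat_def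
proof (intro allI impI)
  fix c :: "('a \<Rightarrow> nat) \<Rightarrow> rat" and m0
  assume fin: "finite {m. c m \<noteq> 0}" and mon: "\<forall>m. c m \<noteq> 0 \<longrightarrow> (\<forall>i. i \<notin> J \<longrightarrow> m i = 0)"
    and s: "(\<Sum>m\<in>{m. c m \<noteq> 0}. of_rat (c m) * (\<Prod>i\<in>J. x i ^ m i)) = 0"
  have monI: "\<forall>m. c m \<noteq> 0 \<longrightarrow> (\<forall>i. i \<notin> I \<longrightarrow> m i = 0)" using mon assms(2) by blast
  have "(\<Sum>m\<in>{m. c m \<noteq> 0}. of_rat (c m) * (\<Prod>i\<in>I. x i ^ m i)) =
        (\<Sum>m\<in>{m. c m \<noteq> 0}. of_rat (c m) * (\<Prod>i\<in>J. x i ^ m i))"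
  proof (rule sum.cong[OF refl])
    fix m assume "m \<in> {m. c m \<noteq> 0}"
    then have "\<forall>i. i \<notin> J \<longrightarrow> m i = 0" using mon by blast
    then have "(\<Prod>i\<in>I. x i ^ m i) = (\<Prod>i\<in>J. x i ^ m i)"
      using assms(1,2) by (intro prod.mono_neutral_right) auto
    then show "of_rat (c m) * (\<Prod>i\<in>I. x i ^ m i) = of_rat (c m) * (\<Prod>i\<in>J. x i ^ m i)" by simp
  qed
  then have "(\<Sum>m\<in>{m. c m \<noteq> 0}. of_rat (c m) * (\<Prod>i\<in>I. x i ^ m i)) = 0" using s by simp
  then have "\<forall>m. c m = 0"
    by (rule mp[OF mp[OF mp[OF spec[OF assms(3)[unfolded alg_indep_over_rat_def], of c] fin] monI]])
  then show "c m0 = 0" by blast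
qed

lemma generic_down: "finite V \<Longrightarrow> generic (Suc d) V q \<Longrightarrow> generic d V q"
  unfolding generic_def by (rule alg_indep_mono) auto

lemma card2_eq: "card e = 2 \<Longrightarrow> x \<in> e \<Longrightarrow> u \<in> e \<Longrightarrow> x \<noteq> u \<Longrightarrow> e = {x, u}"
  by (auto simp: card_2_iff)

lemma sum_ind_swap:
  assumes "finite e" "finite U"
  shows "(\<Sum>w\<in>e. if w \<in> U then 1 else 0 :: real) = (\<Sum>u\<in>U. if u \<in> e then 1 else 0)"
proof -
  have "(\<Sum>w\<in>e. if w \<in> U then 1 else 0 :: real) = real (card (e \<inter> U))"
    using assms by (simp add: sum.If_cases Int_def)
  also have "\<dots> = (\<Sum>u\<in>U. if u \<in> e then 1 else 0)"
    using assms by (simp add: sum.If_cases Int_def conj_commute)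
  finally show ?thesis .
qed



definition extz :: "nat \<Rightarrow> ('v \<Rightarrow> nat \<Rightarrow> real) \<Rightarrow> ('v \<Rightarrow> real) \<Rightarrow> 'v \<Rightarrow> nat \<Rightarrow> real" where
  "extz d q z = (\<lambda>v k. if k = d then z v else q v k)"

definition ind :: "'v set \<Rightarrow> 'v \<Rightarrow> real" where
  "ind U = (\<lambda>w. if w \<in> U then 1 else 0)"

locale rc =
  fixes d :: nat and V :: "'v set" and E A :: "'v set set" and q :: "'v \<Rightarrow> nat \<Rightarrow> real"
  assumes finV: "finite V" and edges: "\<forall>e\<in>E \<union> A. e \<subseteq> V \<and> card e = 2"
    and disj: "A \<inter> E = {}" and finA: "finite A" and indE: "rows_lin_indep d q E"
begin

definition stress :: "('v set \<Rightarrow> real) \<Rightarrow> bool" where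
  "stress w \<longleftrightarrow> (\<forall>cl. (\<Sum>e\<in>E \<union> A. w e * rig_row d q e cl) = 0)"

definition good :: "('v \<Rightarrow> real) \<Rightarrow> bool" where
  "good z \<longleftrightarrow> rows_lin_indep (Suc d) (extz d q z) (E \<union> A)"

lemma finE: "finite E"
proof -
  have "E \<subseteq> Pow V" using edges by auto
  then show ?thesis using finV finite_subset by blast
qed

lemma finF: "finite (E \<union> A)" using finE finA by simp

lemma dep_stress:
  assumes "\<forall>cl. (\<Sum>e\<in>E \<union> A. c e * rig_row (Suc d) (extz d q z) e cl) = 0"
  shows "stress c"
  unfolding stress_def
proof
  fix cl :: "'v \<times> nat"
  obtain x k where cl: "cl = (x,k)" by force
  show "(\<Sum>e\<in>E \<union> A. c e * rig_row d q e cl) = 0"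
  proof (cases "k < d")
    case True
    have eq: "rig_row (Suc d) (extz d q z) e cl = rig_row d q e cl" for e
      using True by (simp add: rig_row_def extz_def cl)
    have "(\<Sum>e\<in>E \<union> A. c e * rig_row (Suc d) (extz d q z) e cl) = 0" using assms by blast
    then show ?thesis by (simp only: eq)
  next
    case False
    then show ?thesis by (simp add: rig_row_def cl)
  qed
qed

lemma dep_top:
  assumes "\<forall>cl. (\<Sum>e\<in>E \<union> A. c e * rig_row (Suc d) (extz d q (ind U)) e cl) = 0"
    and "finite U" "x \<notin> U"
  shows "(\<Sum>u\<in>U. if {x,u} \<in> E \<union> A then c {x,u} else 0) = 0"
proof -
  have T: "rig_row (Suc d) (extz d q (ind U)) e (x,d) = - (\<Sum>u\<in>U. if x \<in> e \<and> u \<in> e then 1 else 0)"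
    if "e \<in> E \<union> A" for e
  proof (cases "x \<in> e")
    case True
    have fe: "finite e" using edges that finV finite_subset by blast
    have "rig_row (Suc d) (extz d q (ind U)) e (x,d) = (\<Sum>w\<in>e. 0 - (if w \<in> U then 1 else 0))"
      using True assms(3) by (simp add: rig_row_def extz_def ind_def)
    also have "\<dots> = - (\<Sum>w\<in>e. if w \<in> U then 1 else 0)" by (simp add: sum_negf)
    also have "\<dots> = - (\<Sum>u\<in>U. if u \<in> e then 1 else 0)" using sum_ind_swap[OF fe assms(2)] by simp
    finally show ?thesis using True by simp
  next
    case False
    then show ?thesis by (simp add: rig_row_def)
  qed
  have "0 = (\<Sum>e\<in>E \<union> A. c e * rig_row (Suc d) (extz d q (ind U)) e (x,d))" using assms(1) by simp
  also have "\<dots> = (\<Sum>e\<in>E \<union> A. - (\<Sum>u\<in>U. if x \<in> e \<and> u \<in> e then c e else 0))"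
  proof (rule sum.cong[OF refl])
    fix e assume e: "e \<in> E \<union> A"
    have "c e * (\<Sum>u\<in>U. if x \<in> e \<and> u \<in> e then 1 else 0) = (\<Sum>u\<in>U. c e * (if x \<in> e \<and> u \<in> e then 1 else 0))"
      by (rule sum_distrib_left)
    also have "\<dots> = (\<Sum>u\<in>U. if x \<in> e \<and> u \<in> e then c e else 0)"
      by (rule sum.cong[OF refl]) simp
    finally show "c e * rig_row (Suc d) (extz d q (ind U)) e (x,d) = - (\<Sum>u\<in>U. if x \<in> e \<and> u \<in> e then c e else 0)"
      using T[OF e] by simp
  qed
  also have "\<dots> = - (\<Sum>e\<in>E \<union> A. \<Sum>u\<in>U. if x \<in> e \<and> u \<in> e then c e else 0)"
    by (simp only: sum_negf)
  also have "(\<Sum>e\<in>E \<union> A. \<Sum>u\<in>U. if x \<in> e \<and> u \<in> e then c e else 0) =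
     (\<Sum>u\<in>U. \<Sum>e\<in>E \<union> A. if x \<in> e \<and> u \<in> e then c e else 0)"
    by (rule sum.swap)
  also have "(\<Sum>u\<in>U. \<Sum>e\<in>E \<union> A. if x \<in> e \<and> u \<in> e then c e else 0) =
      (\<Sum>u\<in>U. if {x,u} \<in> E \<union> A then c {x,u} else 0)"
  proof (rule sum.cong[OF refl])
    fix u assume u: "u \<in> U"
    have xu: "x \<noteq> u" using u assms(3) by blast
    have one: "e = {x,u}" if "e \<in> E \<union> A" "x \<in> e" "u \<in> e" for e
    proof -
      have "card e = 2" using edges that(1) by blast
      then show ?thesis using card2_eq[of e x u] that xu by blast
    qed
    have S: "{e \<in> E \<union> A. x \<in> e \<and> u \<in> e} = (if {x,u} \<in> E \<union> A then {{x,u}} else {})"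
    proof (intro equalityI subsetI)
      fix e assume "e \<in> {e \<in> E \<union> A. x \<in> e \<and> u \<in> e}"
      then have "e \<in> E \<union> A" "x \<in> e" "u \<in> e" by simp_all
      moreover then have "e = {x,u}" using one by blast
      ultimately show "e \<in> (if {x,u} \<in> E \<union> A then {{x,u}} else {})" by simp
    next
      fix e assume "e \<in> (if {x,u} \<in> E \<union> A then {{x,u}} else {})"
      then have "e = {x,u}" "{x,u} \<in> E \<union> A" by (simp_all split: if_splits)
      then show "e \<in> {e \<in> E \<union> A. x \<in> e \<and> u \<in> e}" by simp
    qed
    have "(\<Sum>e\<in>E \<union> A. if x \<in> e \<and> u \<in> e then c e else 0) = (\<Sum>e\<in>{e \<in> E \<union> A. x \<in> e \<and> u \<in> e}. c e)"
      by (rule sum.inter_filter[symmetric]) (rule finF)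
    also have "\<dots> = (if {x,u} \<in> E \<union> A then c {x,u} else 0)" unfolding S by simp
    finally show "(\<Sum>e\<in>E \<union> A. if x \<in> e \<and> u \<in> e then c e else 0) = (if {x,u} \<in> E \<union> A then c {x,u} else 0)" .
  qed
  finally show ?thesis by simp
qed

end



context rc begin

lemma stress_lin:
  assumes "stress w1" "stress w2"
  shows "stress (\<lambda>e. a * w1 e + b * w2 e)"
  unfolding stress_def
proof
  fix cl
  have "(\<Sum>e\<in>E \<union> A. (a * w1 e + b * w2 e) * rig_row d q e cl) =
        a * (\<Sum>e\<in>E \<union> A. w1 e * rig_row d q e cl) + b * (\<Sum>e\<in>E \<union> A. w2 e * rig_row d q e cl)"
    by (simp add: sum.distrib sum_distrib_left algebra_simps)
  then show "(\<Sum>e\<in>E \<union> A. (a * w1 e + b * w2 e) * rig_row d q e cl) = 0"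
    using assms unfolding stress_def by simp
qed

lemma stress_A0:
  assumes "stress w" "\<forall>e\<in>A. w e = 0"
  shows "\<forall>e\<in>E \<union> A. w e = 0"
proof -
  have "\<forall>cl. (\<Sum>e\<in>E. w e * rig_row d q e cl) = 0"
  proof
    fix cl
    have "(\<Sum>e\<in>E \<union> A. w e * rig_row d q e cl) = (\<Sum>e\<in>E. w e * rig_row d q e cl) + (\<Sum>e\<in>A. w e * rig_row d q e cl)"
      using disj finE finA by (intro sum.union_disjoint) auto
    moreover have "(\<Sum>e\<in>A. w e * rig_row d q e cl) = 0" using assms(2) by simp
    ultimately show "(\<Sum>e\<in>E. w e * rig_row d q e cl) = 0" using assms(1) unfolding stress_def by simp
  qed
  then have "\<forall>e\<in>E. w e = 0" using indE unfolding rows_lin_indep_def by blast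
  then show ?thesis using assms(2) by blast
qed

lemma stress_eqA:
  assumes "stress w1" "stress w2" "\<forall>e\<in>A. w1 e = w2 e"
  shows "\<forall>e\<in>E \<union> A. w1 e = w2 e"
proof -
  have "stress (\<lambda>e. 1 * w1 e + (-1) * w2 e)" by (rule stress_lin[OF assms(1,2)])
  moreover have "\<forall>e\<in>A. 1 * w1 e + (-1) * w2 e = 0" using assms(3) by simp
  ultimately have "\<forall>e\<in>E \<union> A. 1 * w1 e + (-1) * w2 e = 0" by (rule stress_A0)
  then show ?thesis by simp
qed

lemma vertex_good:
  assumes "\<forall>w. stress w \<longrightarrow> (\<forall>e\<in>E \<union> A. u \<in> e \<longrightarrow> w e = 0) \<longrightarrow> (\<forall>e\<in>E \<union> A. w e = 0)"
  shows "good (ind {u})"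
  unfolding good_def rows_lin_indep_def
proof (intro allI impI)
  fix c assume dep: "\<forall>cl. (\<Sum>e\<in>E \<union> A. c e * rig_row (Suc d) (extz d q (ind {u})) e cl) = 0"
  have st: "stress c" by (rule dep_stress[OF dep])
  have "c e = 0" if e: "e \<in> E \<union> A" "u \<in> e" for e
  proof -
    have "card e = 2" using edges e(1) by blast
    then obtain x where x: "x \<in> e" "x \<noteq> u" using e(2)
      by (metis card_2_iff insertCI insert_iff)
    have eq: "e = {x,u}" using card2_eq[OF \<open>card e = 2\<close> x(1) e(2) x(2)] .
    have "(\<Sum>v\<in>{u}. if {x,v} \<in> E \<union> A then c {x,v} else 0) = 0"
      by (rule dep_top[OF dep]) (use x in auto)
    then show ?thesis using eq e(1) by simp
  qed
  then show "\<forall>e\<in>E \<union> A. c e = 0" using assms st by blast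
qed

end



context rc begin

lemma bad_vertex:
  assumes "A = {a,b}" "a \<noteq> b" "u \<in> a" "\<not> good (ind {u})"
  shows "\<exists>w. stress w \<and> w a = 0 \<and> w b = 1 \<and> (\<forall>e\<in>E \<union> A. u \<in> e \<longrightarrow> w e = 0)"
proof -
  obtain w where w: "stress w" "\<forall>e\<in>E \<union> A. u \<in> e \<longrightarrow> w e = 0" "\<not> (\<forall>e\<in>E \<union> A. w e = 0)"
    using vertex_good assms(4) by blast
  have wa: "w a = 0" using w(2) assms(1,3) by blast
  have wb: "w b \<noteq> 0"
  proof
    assume "w b = 0"
    then have "\<forall>e\<in>A. w e = 0" using wa assms(1) by blast
    then show False using stress_A0[OF w(1)] w(3) by blast
  qed
  define w' where "w' e = (1 / w b) * w e + 0 * w e" for e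
  have "stress w'" unfolding w'_def by (rule stress_lin[OF w(1) w(1)])
  moreover have "w' a = 0" "w' b = 1" using wa wb by (simp_all add: w'_def)
  moreover have "\<forall>e\<in>E \<union> A. u \<in> e \<longrightarrow> w' e = 0" using w(2) by (simp add: w'_def)
  ultimately show ?thesis by blast
qed

lemma edge_split:
  assumes "e \<in> E \<union> A"
  obtains u v where "e = {u,v}" "u \<noteq> v"
  using edges assms card_2_iff by metis

lemma exists_good:
  assumes "card A \<le> 2"
  shows "\<exists>z. good z"
proof -
  have "card A = 0 \<or> card A = 1 \<or> card A = 2" using assms by linarith
  then consider "A = {}" | a where "A = {a}" | a1 a2 where "A = {a1,a2}" "a1 \<noteq> a2"
  proof -
    assume h1: "A = {} \<Longrightarrow> thesis" and h2: "\<And>a. A = {a} \<Longrightarrow> thesis"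
      and h3: "\<And>a1 a2. A = {a1,a2} \<Longrightarrow> a1 \<noteq> a2 \<Longrightarrow> thesis"
    from \<open>card A = 0 \<or> card A = 1 \<or> card A = 2\<close> show thesis
    proof (elim disjE)
      assume "card A = 0" then show thesis using finA h1 by simp
    next
      assume "card A = 1" then obtain a where "A = {a}" by (auto simp: card_1_singleton_iff)
      then show thesis by (rule h2)
    next
      assume "card A = 2" then obtain a1 a2 where "A = {a1,a2}" "a1 \<noteq> a2" by (auto simp: card_2_iff)
      then show thesis by (rule h3)
    qed
  qed
  then show ?thesis
  proof cases
    case 1
    have "good (ind {undefined})"
      by (rule vertex_good) (use stress_A0 1 in blast)
    then show ?thesis by blast
  next
    case (2 a)
    then obtain u v where uv: "a = {u,v}" "u \<noteq> v" using edge_split by blast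
    have "good (ind {u})"
    proof (rule vertex_good, intro allI impI)
      fix w assume "stress w" "\<forall>e\<in>E \<union> A. u \<in> e \<longrightarrow> w e = 0"
      then have "\<forall>e\<in>A. w e = 0" using 2 uv by blast
      then show "\<forall>e\<in>E \<union> A. w e = 0" using stress_A0 \<open>stress w\<close> by blast
    qed
    then show ?thesis by blast
  next
    case (3 a1 a2)
    show ?thesis
    proof (cases "\<exists>x. x \<in> a1 \<and> x \<in> a2")
      case True
      then obtain x where x: "x \<in> a1" "x \<in> a2" by blast
      have "good (ind {x})"
      proof (rule vertex_good, intro allI impI)
        fix w assume "stress w" "\<forall>e\<in>E \<union> A. x \<in> e \<longrightarrow> w e = 0"
        then have "\<forall>e\<in>A. w e = 0" using 3 x by blast
        then show "\<forall>e\<in>E \<union> A. w e = 0" using stress_A0 \<open>stress w\<close> by blast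
      qed
      then show ?thesis by blast
    next
      case False
      then have nc: "\<And>x. x \<in> a1 \<Longrightarrow> x \<notin> a2" by blast
      obtain u1 v1 where a1: "a1 = {u1,v1}" "u1 \<noteq> v1" using edge_split 3 by blast
      obtain u2 v2 where a2: "a2 = {u2,v2}" "u2 \<noteq> v2" using edge_split 3 by blast
      show ?thesis
      proof (cases "good (ind {u1}) \<or> good (ind {v1}) \<or> good (ind {u2}) \<or> good (ind {v2})")
        case True then show ?thesis by blast
      next
        case False
        have A': "A = {a2, a1}" using 3 by blast
        obtain w2 where w2: "stress w2" "w2 a1 = 0" "w2 a2 = 1" "\<forall>e\<in>E \<union> A. u1 \<in> e \<longrightarrow> w2 e = 0"
          using bad_vertex[OF 3(1) 3(2), of u1] False a1 by blast
        obtain w2' where w2': "stress w2'" "w2' a1 = 0" "w2' a2 = 1" "\<forall>e\<in>E \<union> A. v1 \<in> e \<longrightarrow> w2' e = 0"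
          using bad_vertex[OF 3(1) 3(2), of v1] False a1 by blast
        obtain w1 where w1: "stress w1" "w1 a2 = 0" "w1 a1 = 1" "\<forall>e\<in>E \<union> A. u2 \<in> e \<longrightarrow> w1 e = 0"
          using bad_vertex[OF A' 3(2)[symmetric], of u2] False a2 by blast
        obtain w1' where w1': "stress w1'" "w1' a2 = 0" "w1' a1 = 1" "\<forall>e\<in>E \<union> A. v2 \<in> e \<longrightarrow> w1' e = 0"
          using bad_vertex[OF A' 3(2)[symmetric], of v2] False a2 by blast
        have e2: "\<forall>e\<in>E \<union> A. w2 e = w2' e"
          by (rule stress_eqA[OF w2(1) w2'(1)]) (use w2 w2' 3 in auto)
        have e1: "\<forall>e\<in>E \<union> A. w1 e = w1' e"
          by (rule stress_eqA[OF w1(1) w1'(1)]) (use w1 w1' 3 in auto)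
        have w2v: "\<forall>e\<in>E \<union> A. v1 \<in> e \<longrightarrow> w2 e = 0" using e2 w2'(4) by auto
        have w1v: "\<forall>e\<in>E \<union> A. v2 \<in> e \<longrightarrow> w1 e = 0" using e1 w1'(4) by auto
        have d: "u1 \<noteq> u2" "v1 \<noteq> u2" "v1 \<noteq> u1" "v2 \<noteq> u1" "v2 \<noteq> u2"
          using nc a1 a2 by auto
        have "good (ind {u1,u2})"
          unfolding good_def rows_lin_indep_def
        proof (intro allI impI)
          fix c assume dep: "\<forall>cl. (\<Sum>e\<in>E \<union> A. c e * rig_row (Suc d) (extz d q (ind {u1,u2})) e cl) = 0"
          have st: "stress c" by (rule dep_stress[OF dep])
          define w where "w e = c a1 * w1 e + c a2 * w2 e" for e
          have sw: "stress w" unfolding w_def by (rule stress_lin[OF w1(1) w2(1)])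
          have cw: "\<forall>e\<in>E \<union> A. c e = w e"
            by (rule stress_eqA[OF st sw]) (use 3 w1 w2 in \<open>auto simp: w_def\<close>)
          have a1F: "a1 \<in> E \<union> A" "a2 \<in> E \<union> A" using 3 by auto
          have s1: "(\<Sum>v\<in>{u1,u2}. if {v1,v} \<in> E \<union> A then c {v1,v} else 0) = 0"
            by (rule dep_top[OF dep]) (use d in auto)
          have x1: "(if {v1,u2} \<in> E \<union> A then c {v1,u2} else 0) = 0"
          proof (cases "{v1,u2} \<in> E \<union> A")
            case True
            then have "w1 {v1,u2} = 0" "w2 {v1,u2} = 0" using w1(4) w2v by auto
            then show ?thesis using True cw by (simp add: w_def)
          qed simp
          have "{v1,u1} = a1" using a1 by blast
          then have "c a1 = 0" using s1 x1 d a1F by simp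
          have s2: "(\<Sum>v\<in>{u1,u2}. if {v2,v} \<in> E \<union> A then c {v2,v} else 0) = 0"
            by (rule dep_top[OF dep]) (use d in auto)
          have x2: "(if {v2,u1} \<in> E \<union> A then c {v2,u1} else 0) = 0"
          proof (cases "{v2,u1} \<in> E \<union> A")
            case True
            then have "w1 {v2,u1} = 0" "w2 {v2,u1} = 0" using w1v w2(4) by auto
            then show ?thesis using True cw by (simp add: w_def)
          qed simp
          have "{v2,u2} = a2" using a2 by blast
          then have "c a2 = 0" using s2 x2 d a1F by simp
          show "\<forall>e\<in>E \<union> A. c e = 0" using cw \<open>c a1 = 0\<close> \<open>c a2 = 0\<close> by (simp add: w_def)
        qed
        then show ?thesis by blast
      qed
    qed
  qed
qed

end


theorem corollary4p13:
  fixes V :: "'v set" and E A :: "'v set set" and d :: nat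
  assumes "d \<ge> 1"
    and "simple_graph V E"
    and "rigidity_indep d V E"
    and "\<forall>e\<in>A. e \<subseteq> V \<and> card e = 2"
    and "A \<inter> E = {}"
    and "finite A" and "card A \<le> 2"
  shows "rigidity_indep (Suc d) V (E \<union> A)"
proof -
  have finV: "finite V" using assms(2) unfolding simple_graph_def by blast
  have edges: "\<forall>e\<in>E \<union> A. e \<subseteq> V \<and> card e = 2" using assms(2,4) unfolding simple_graph_def by blast
  show ?thesis unfolding rigidity_indep_def
  proof (intro allI impI)
    fix q assume gq: "generic (Suc d) V q"
    have "generic d V q" by (rule generic_down[OF finV gq])
    then have indE: "rows_lin_indep d q E" using assms(3) unfolding rigidity_indep_def by blast
    interpret rc d V E A q
      by unfold_locales (use finV edges assms(5,6) indE in auto)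
    obtain z where "good z" using exists_good assms(7) by blast
    then have "rows_lin_indep (Suc d) (extz d q z) (E \<union> A)" by (simp add: good_def)
    moreover have "\<forall>e\<in>E \<union> A. e \<subseteq> V" using edges by blast
    ultimately show "rows_lin_indep (Suc d) q (E \<union> A)"
      using transfer[OF finV finF] gq by blast
  qed
qed

end
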